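(* Let $n$ be a positive integer, $x\in\Gamma_n$ and $z\in\{r,b\}^n$. Then \[ \tilde\xi_n(x,z)=\xi_n\bigl(\sigma_{\mathrm{RF}}(x)\bigr)-\mathrm{wt}_{G_x}(z). \]
   Context: Let $[n]=\{1,\dots,n\}$. $\Gamma_n$ is the set of words $x=(x_1,\dots,x_{2n})\in[n]^{2n}$ in which every symbol of $[n]$ occurs exactly twice. Colours are formal symbols $r,b$; $\neg$ swaps them, $\neg^0$ is the identity, $\neg^1=\neg$. $[\,\cdot\,]$ is the Iverson bracket. For $f\in\{r,b\}^{2n}$, $\xi_n(f)=\sum_{i=1}^{2n-1}[f_i\neq f_{i+1}]$. For $z\in\{r,b\}^n$, $\mathcal E_n(x,z)_i=\neg^{[x_i\in\{x_1,\dots,x_{i-1}\}]}z_{x_i}$ ($i\in[2n]$) and $\tilde\xi_n(x,z)=\xi_n(\mathcal E_n(x,z))$. The red-first colouring $\sigma_{\mathrm{RF}}(x)$ has $i$-th entry $r$ if $x_i\notin\{x_1,\dots,x_{i-1}\}$ and $b$ otherwise. For $i\in[2n-1]$, $\eta(x,i)=[x_{i+1}\in\{x_1,\dots,x_i\}]\oplus[x_i\in\{x_1,\dots,x_{i-1}\}]$. For $e\subseteq[n]$, $\theta_x(e)=-\sum_{i=1}^{2n-1}(-1)^{\eta(x,i)}\delta_{e,\{x_i,x_{i+1}\}}$. The BPSP graph $G_x=(V_x,E_x,W_x)$ has $V_x=[n]$, $E_x=\{\{x_i,x_{i+1}\}: i\in[2n-1],\ x_i\neq x_{i+1},\ \theta_x(\{x_i,x_{i+1}\})\neq0\}$,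 $W_x=\theta_x|_{E_x}$. $\mathrm{wt}_{G_x}(z)=\sum_{\{i,j\}\in E_x}W_x(\{i,j\})[z_i\neq z_j]$. *)

theory Defs
  imports Main
begin

datatype colour = R | B

fun cneg :: "colour \<Rightarrow> colour" where
  "cneg R = B" | "cneg B = R"

text \<open>Words are functions on positions 1..2n; x i is the i-th letter.\<close>

definition Gamma :: "nat \<Rightarrow> (nat \<Rightarrow> nat) set" where
  "Gamma n = {x. (\<forall>i\<in>{1..2*n}. x i \<in> {1..n}) \<and>
                 (\<forall>a\<in>{1..n}. card {i\<in>{1..2*n}. x i = a} = 2)}"

definition iver :: "bool \<Rightarrow> int" where
  "iver P = (if P then 1 else 0)"

definition seen :: "(nat \<Rightarrow> nat) \<Rightarrow> nat \<Rightarrow> bool" where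
  "seen x i = (x i \<in> x ` {1..<i})"

definition xi :: "nat \<Rightarrow> (nat \<Rightarrow> colour) \<Rightarrow> int" where
  "xi n f = (\<Sum>i=1..<2*n. iver (f i \<noteq> f (i+1)))"

definition encode :: "(nat \<Rightarrow> nat) \<Rightarrow> (nat \<Rightarrow> colour) \<Rightarrow> nat \<Rightarrow> colour" where
  "encode x z i = (if seen x i then cneg (z (x i)) else z (x i))"

definition xi_tilde :: "nat \<Rightarrow> (nat \<Rightarrow> nat) \<Rightarrow> (nat \<Rightarrow> colour) \<Rightarrow> int" where
  "xi_tilde n x z = xi n (encode x z)"

definition sigma_RF :: "(nat \<Rightarrow> nat) \<Rightarrow> nat \<Rightarrow> colour" where
  "sigma_RF x i = (if seen x i then B else R)"

definition eta :: "(nat \<Rightarrow> nat) \<Rightarrow> nat \<Rightarrow> bool" where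
  "eta x i = (seen x (i+1) \<noteq> seen x i)"

definition theta :: "nat \<Rightarrow> (nat \<Rightarrow> nat) \<Rightarrow> nat set \<Rightarrow> int" where
  "theta n x e = - (\<Sum>i=1..<2*n. (if eta x i then -1 else 1) * iver (e = {x i, x (i+1)}))"

definition bpsp_edges :: "nat \<Rightarrow> (nat \<Rightarrow> nat) \<Rightarrow> nat set set" where
  "bpsp_edges n x = {{x i, x (i+1)} | i. i \<in> {1..<2*n} \<and> x i \<noteq> x (i+1)
                        \<and> theta n x {x i, x (i+1)} \<noteq> 0}"

definition wt :: "nat \<Rightarrow> (nat \<Rightarrow> nat) \<Rightarrow> (nat \<Rightarrow> colour) \<Rightarrow> int" where
  "wt n x z = (\<Sum>e\<in>bpsp_edges n x. theta n x e *
       iver (\<exists>a b. e = {a, b} \<and> z a \<noteq> z b))"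

end

theory Submission
  imports Defs
begin

lemma D_pair: "iver (\<exists>a b. {p, q} = {a, b} \<and> z a \<noteq> (z::nat \<Rightarrow> colour) b) = iver (z p \<noteq> z q)"
  unfolding iver_def by (auto simp: doubleton_eq_iff)

lemma step_id:
  "iver (encode x z i \<noteq> encode x z (i+1)) =
   iver (sigma_RF x i \<noteq> sigma_RF x (i+1)) + (if eta x i then -1 else 1) * iver (z (x i) \<noteq> z (x (i+1)))"
  unfolding encode_def sigma_RF_def eta_def iver_def
  by (cases "seen x i"; cases "seen x (i+1)"; cases "z (x i)"; cases "z (x (i+1))"; simp)

theorem proposition7:
  fixes n :: nat and x :: "nat \<Rightarrow> nat" and z :: "nat \<Rightarrow> colour"
  assumes "n \<ge> 1" and "x \<in> Gamma n"
  shows "xi_tilde n x z = xi n (sigma_RF x) - wt n x z"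
proof -
  define I where "I = {1..<2*n}"
  define ee where "ee i = {x i, x (i+1)}" for i
  define S where "S = ee ` I"
  define D where "D e = iver (\<exists>a b. e = {a, b} \<and> z a \<noteq> z b)" for e
  define c where "c i = (if eta x i then -1 else (1::int))" for i
  have finS: "finite S" unfolding S_def I_def by simp
  have ES: "bpsp_edges n x \<subseteq> S" unfolding bpsp_edges_def S_def I_def ee_def by auto
  have th: "theta n x e = - (\<Sum>i\<in>I. c i * iver (e = ee i))" for e
    unfolding theta_def I_def c_def ee_def by simp
  have "wt n x z = (\<Sum>e\<in>bpsp_edges n x. theta n x e * D e)"
    unfolding wt_def D_def by simp
  also have "\<dots> = (\<Sum>e\<in>S. theta n x e * D e)"
  proof (rule sum.mono_neutral_left[OF finS ES], rule ballI)
    fix e assume e: "e \<in> S - bpsp_edges n x"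
    then obtain i where i: "i \<in> I" "e = ee i" unfolding S_def by auto
    show "theta n x e * D e = 0"
    proof (cases "x i = x (i+1)")
      case True
      then show ?thesis using i unfolding D_def ee_def iver_def by (auto simp: doubleton_eq_iff)
    next
      case False
      then have "theta n x e = 0" using e i unfolding bpsp_edges_def I_def ee_def by blast
      then show ?thesis by simp
    qed
  qed
  also have "\<dots> = - (\<Sum>e\<in>S. \<Sum>i\<in>I. c i * (iver (e = ee i) * D e))"
    by (simp add: th sum_distrib_right sum_negf mult.assoc)
  also have "\<dots> = - (\<Sum>i\<in>I. c i * (\<Sum>e\<in>S. iver (e = ee i) * D e))"
    by (subst sum.swap) (simp add: sum_distrib_left)
  also have "\<dots> = - (\<Sum>i\<in>I. c i * D (ee i))"
  proof -
    have "(\<Sum>e\<in>S. iver (e = ee i) * D e) = D (ee i)" if "i \<in> I" for i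
    proof -
      have "(\<Sum>e\<in>S. iver (e = ee i) * D e) = (\<Sum>e\<in>S. if e = ee i then D e else 0)"
        by (rule sum.cong) (auto simp: iver_def)
      also have "\<dots> = D (ee i)" using that finS unfolding S_def by simp
      finally show ?thesis .
    qed
    then show ?thesis by simp
  qed
  also have "\<dots> = - (\<Sum>i\<in>I. c i * iver (z (x i) \<noteq> z (x (i+1))))"
    unfolding D_def ee_def by (simp add: D_pair)
  finally have W: "wt n x z = - (\<Sum>i\<in>I. c i * iver (z (x i) \<noteq> z (x (i+1))))" .
  have "xi_tilde n x z = (\<Sum>i\<in>I. iver (sigma_RF x i \<noteq> sigma_RF x (i+1)) + c i * iver (z (x i) \<noteq> z (x (i+1))))"
    unfolding xi_tilde_def xi_def I_def c_def using step_id by simp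
  also have "\<dots> = xi n (sigma_RF x) - wt n x z"
    unfolding W xi_def I_def by (simp add: sum.distrib)
  finally show ?thesis .
qed

end
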